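(* Let $X$ be a compact Hausdorff space and let $D$ be a unital separable $C(X)$-algebra all of whose fibres $D_x$ ($x\in X$) are properly infinite. Then there exists an integer $l>0$ such that the matrix algebra $M_l(D)$ is properly infinite.
   Context: A $C(X)$-algebra is a C*-algebra $D$ together with a unital $*$-homomorphism from $C(X)$ (the continuous complex-valued functions on $X$) into the centre of the multiplier algebra $\mathcal{M}(D)$. For $x\in X$, let $C_x(X)=\{f\in C(X): f(x)=0\}$; the fibre $D_x$ is the quotient of $D$ by the closed ideal $C_x(X)D$. A unital C*-algebra is properly infinite if its unit $1$ is a properly infinite projection, i.e. there are mutually orthogonal projections $p_1,p_2$ with $p_1+p_2\le 1$ and each $p_i$ Murray–von Neumann equivalent to $1$ (equivalently, it contains two isometries with orthogonal ranges). *)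

theory Defs
  imports "HOL-Analysis.Analysis"
begin

class cstar_algebra = real_normed_algebra_1 + banach +
  fixes cscale :: "complex \<Rightarrow> 'a \<Rightarrow> 'a"
    and adj :: "'a \<Rightarrow> 'a"
  assumes cscale_of_real: "cscale (complex_of_real r) x = scaleR r x"
    and cscale_add_right: "cscale a (x + y) = cscale a x + cscale a y"
    and cscale_add_left: "cscale (a + b) x = cscale a x + cscale b x"
    and cscale_cscale: "cscale a (cscale b x) = cscale (a * b) x"
    and cscale_mult_left: "cscale a x * y = cscale a (x * y)"
    and cscale_mult_right: "x * cscale a y = cscale a (x * y)"
    and norm_cscale: "norm (cscale a x) = cmod a * norm x"
    and adj_adj: "adj (adj x) = x"
    and adj_add: "adj (x + y) = adj x + adj y"
    and adj_mult: "adj (x * y) = adj y * adj x"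
    and adj_cscale: "adj (cscale a x) = cscale (cnj a) (adj x)"
    and cstar_identity: "norm (adj x * x) = (norm x)^2"

text \<open>C(X)-algebra structure on a unital C*-algebra D (so M(D) = D):
  a unital *-homomorphism from C(X) into the centre of D.\<close>

definition CX_algebra :: "(('x::topological_space \<Rightarrow> complex) \<Rightarrow> 'a::cstar_algebra) \<Rightarrow> bool" where
  "CX_algebra \<phi> \<longleftrightarrow>
     (\<forall>f g. continuous_on UNIV f \<longrightarrow> continuous_on UNIV g \<longrightarrow>
        \<phi> (\<lambda>x. f x + g x) = \<phi> f + \<phi> g \<and> \<phi> (\<lambda>x. f x * g x) = \<phi> f * \<phi> g) \<and>
     (\<forall>c f. continuous_on UNIV f \<longrightarrow> \<phi> (\<lambda>x. c * f x) = cscale c (\<phi> f)) \<and>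
     (\<forall>f. continuous_on UNIV f \<longrightarrow> \<phi> (\<lambda>x. cnj (f x)) = adj (\<phi> f)) \<and>
     \<phi> (\<lambda>x. 1) = 1 \<and>
     (\<forall>f d. continuous_on UNIV f \<longrightarrow> \<phi> f * d = d * \<phi> f)"

definition fibre_ideal :: "(('x::topological_space \<Rightarrow> complex) \<Rightarrow> 'a::cstar_algebra) \<Rightarrow> 'x \<Rightarrow> 'a set" where
  "fibre_ideal \<phi> x = closure (span {\<phi> f * d | f d. continuous_on UNIV f \<and> f x = 0})"

text \<open>The quotient D/I is properly infinite: it contains two isometries with
  orthogonal ranges, i.e. there are lifts s1, s2 in D satisfying the relations modulo I.\<close>

definition properly_infinite_mod :: "'a::cstar_algebra set \<Rightarrow> bool" where
  "properly_infinite_mod I \<longleftrightarrow>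
     (\<exists>s1 s2. adj s1 * s1 - 1 \<in> I \<and> adj s2 * s2 - 1 \<in> I \<and>
              (s1 * adj s1) * (s2 * adj s2) \<in> I)"

text \<open>l x l matrices over D, represented as functions with indices below l.\<close>

definition mat_mult :: "nat \<Rightarrow> (nat \<Rightarrow> nat \<Rightarrow> 'a::cstar_algebra) \<Rightarrow> (nat \<Rightarrow> nat \<Rightarrow> 'a) \<Rightarrow> nat \<Rightarrow> nat \<Rightarrow> 'a" where
  "mat_mult l A B = (\<lambda>i j. \<Sum>k<l. A i k * B k j)"

definition mat_adj :: "(nat \<Rightarrow> nat \<Rightarrow> 'a::cstar_algebra) \<Rightarrow> nat \<Rightarrow> nat \<Rightarrow> 'a" where
  "mat_adj A = (\<lambda>i j. adj (A j i))"

definition mat_one :: "nat \<Rightarrow> nat \<Rightarrow> 'a::cstar_algebra" where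
  "mat_one = (\<lambda>i j. if i = j then 1 else 0)"

definition mat_eq :: "nat \<Rightarrow> (nat \<Rightarrow> nat \<Rightarrow> 'a) \<Rightarrow> (nat \<Rightarrow> nat \<Rightarrow> 'a) \<Rightarrow> bool" where
  "mat_eq l A B \<longleftrightarrow> (\<forall>i<l. \<forall>j<l. A i j = B i j)"

definition mat_properly_infinite :: "'a::cstar_algebra itself \<Rightarrow> nat \<Rightarrow> bool" where
  "mat_properly_infinite T l \<longleftrightarrow>
     (\<exists>S1 S2 :: nat \<Rightarrow> nat \<Rightarrow> 'a.
        mat_eq l (mat_mult l (mat_adj S1) S1) mat_one \<and>
        mat_eq l (mat_mult l (mat_adj S2) S2) mat_one \<and>
        mat_eq l (mat_mult l (mat_mult l S1 (mat_adj S1)) (mat_mult l S2 (mat_adj S2))) (\<lambda>i j. 0))"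

end

theory Submission
  imports Defs "HOL-Computational_Algebra.Formal_Power_Series"
begin


lemma adj_zero: "adj (0::'a::cstar_algebra) = 0"
  by (metis add_cancel_right_right adj_add)

lemma adj_scaleR: "adj (scaleR r (x::'a::cstar_algebra)) = scaleR r (adj x)"
  by (metis adj_cscale cscale_of_real complex_cnj_complex_of_real)

lemma adj_one: "adj (1::'a::cstar_algebra) = 1"
  by (metis adj_adj adj_mult mult.right_neutral mult.left_neutral)

lemma adj_uminus: "adj (- (x::'a::cstar_algebra)) = - adj x"
  using adj_scaleR[of "-1" x] by simp

lemma adj_diff: "adj ((x::'a::cstar_algebra) - y) = adj x - adj y"
  by (metis adj_add adj_uminus diff_conv_add_uminus)

lemma norm_adj_le: "norm (x::'a::cstar_algebra) \<le> norm (adj x)"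
proof (cases "x = 0")
  case True then show ?thesis by (simp add: adj_zero)
next
  case False
  have "(norm x)^2 \<le> norm (adj x) * norm x"
    using cstar_identity[of x] norm_mult_ineq[of "adj x" x] by simp
  then show ?thesis using False by (simp add: power2_eq_square)
qed

lemma norm_adj: "norm (adj (x::'a::cstar_algebra)) = norm x"
  by (metis adj_adj antisym norm_adj_le)

lemma bounded_linear_adj: "bounded_linear (adj :: 'a::cstar_algebra \<Rightarrow> 'a)"
  by (rule bounded_linear_intro[where K=1]) (auto simp: adj_add adj_scaleR norm_adj)

lemma adj_power: "adj ((x::'a::cstar_algebra) ^ n) = (adj x) ^ n"
  by (induction n) (auto simp: adj_one adj_mult power_commutes)

lemma adj_sum: "adj (\<Sum>i\<in>A. f i) = (\<Sum>i\<in>A. adj (f i :: 'a::cstar_algebra))"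
  by (induction A rule: infinite_finite_induct) (auto simp: adj_zero adj_add)

lemma gch_bound: "\<bar>(-1/2::real) gchoose k\<bar> \<le> 1"
proof (induction k)
  case 0 then show ?case by simp
next
  case (Suc k)
  have "of_nat (Suc k) * ((-1/2::real) gchoose Suc k) = (-1/2 - of_nat k) * ((-1/2) gchoose k)"
    using gbinomial_mult_1[of "-1/2::real" k] by (simp add: algebra_simps)
  then have "(-1/2::real) gchoose Suc k = ((-1/2 - of_nat k) / of_nat (Suc k)) * ((-1/2) gchoose k)"
    by (simp add: field_simps del: of_nat_Suc)
  moreover have "\<bar>(-1/2 - of_nat k) / of_nat (Suc k)\<bar> \<le> (1::real)"
    by (simp add: divide_simps)
  ultimately show ?case
    by (metis Suc.IH abs_mult mult_le_one abs_ge_zero)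
qed

lemma geom_sums_alg:
  fixes a :: "'a::{real_normed_algebra_1,banach}"
  assumes "norm a < 1"
  shows "(\<lambda>k. (-a)^k * (1 + a)) sums 1"
proof -
  have "(\<lambda>n. (-a)^n) \<longlonglongrightarrow> 0"
  proof -
    have "(\<lambda>n. norm a ^ n) \<longlonglongrightarrow> 0" using assms by (simp add: LIMSEQ_power_zero)
    then show ?thesis
      by (rule Lim_null_comparison[rotated]) (auto simp: norm_power_ineq[of "-a", simplified])
  qed
  then have "(\<lambda>n. (-a)^n - (-a)^Suc n) sums ((-a)^0 - 0)"
    using telescope_sums'[of "\<lambda>n. (-a)^n" 0] by simp
  moreover have "(-a)^n * (1 + a) = (-a)^n - (-a)^Suc n" for n
  proof -
    have "(-a)^n*(-a) = (-a)*(-a)^n" by (rule power_commutes)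
    then show ?thesis by (simp add: algebra_simps)
  qed
  ultimately show ?thesis by simp
qed

lemma isr:
  fixes a :: "'a::cstar_algebra"
  assumes sa: "adj a = a" and na: "norm a \<le> 1/2"
  shows "\<exists>r. adj r = r \<and> norm r \<le> 2 \<and> r * (1 + a) * r = 1"
proof -
  define c where "c k = ((-1/2::real) gchoose k)" for k
  define f where "f k = c k *\<^sub>R a ^ k" for k
  have nf: "norm (f k) \<le> (1/2)^k" for k
  proof -
    have "norm (f k) = \<bar>c k\<bar> * norm (a^k)" by (simp add: f_def)
    also have "\<dots> \<le> 1 * norm a ^ k"
      using gch_bound[of k] by (intro mult_mono) (auto simp: c_def norm_power_ineq)
    also have "\<dots> \<le> (1/2)^k" using na by (simp add: power_mono)
    finally show ?thesis .
  qed
  have sn: "summable (\<lambda>k. norm (f k))"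
    by (rule summable_comparison_test[OF _ summable_geometric[of "1/2::real"]]) (use nf in auto)
  then have sf: "summable f" by (rule summable_norm_cancel)
  define r where "r = suminf f"
  have nr: "norm r \<le> 2"
  proof -
    have "norm r \<le> (\<Sum>k. norm (f k))" unfolding r_def by (rule summable_norm[OF sn])
    also have "\<dots> \<le> (\<Sum>k. (1/2::real)^k)"
      by (rule suminf_le[OF nf sn summable_geometric]) simp
    also have "\<dots> = 2" using suminf_geometric[of "1/2::real"] by simp
    finally show ?thesis .
  qed
  have ar: "adj r = r"
  proof -
    have "(\<lambda>k. adj (f k)) sums adj r"
      using bounded_linear.sums[OF bounded_linear_adj, of f r] sf r_def summable_sums by blast
    moreover have "adj (f k) = f k" for k
      by (simp add: f_def adj_scaleR adj_power sa)
    ultimately show ?thesis using sums_unique2 sf r_def summable_sums by (metis (no_types, lifting) ext)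
  qed
  have rr: "r * r = (\<Sum>k. (-a)^k)"
  proof -
    have cp: "(\<lambda>k. \<Sum>i\<le>k. f i * f (k - i)) sums (r * r)"
      unfolding r_def by (rule Cauchy_product_sums[OF sn sn])
    have "(\<Sum>i\<le>k. f i * f (k - i)) = (-a)^k" for k
    proof -
      have "(\<Sum>i\<le>k. f i * f (k - i)) = (\<Sum>i\<le>k. (c i * c (k - i)) *\<^sub>R a ^ k)"
        by (rule sum.cong) (auto simp: f_def power_add[symmetric])
      also have "\<dots> = (\<Sum>i\<le>k. c i * c (k - i)) *\<^sub>R a ^ k"
        by (simp add: scaleR_sum_left)
      also have "(\<Sum>i\<le>k. c i * c (k - i)) = (-1::real) gchoose k"
        using gbinomial_Vandermonde[of "-1/2::real" "-1/2" k] by (simp add: c_def atLeast0AtMost)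
      also have "(-1::real) gchoose k = (-1)^k"
        using gbinomial_minus[of "1::real" k] binomial_gbinomial[of k k, where 'a=real] by simp
      finally have "(\<Sum>i\<le>k. f i * f (k - i)) = (-1::real)^k *\<^sub>R a ^ k" .
      also have "\<dots> = (-a)^k"
      proof (induction k)
        case (Suc k)
        then have "(-1::real)^k *\<^sub>R (a * a^k) = a * (-a)^k" by (metis mult_scaleR_right)
        then show ?case by simp
      qed simp
      finally show ?thesis .
    qed
    with cp show ?thesis by (simp add: sums_iff)
  qed
  have ra: "r * a = a * r"
  proof -
    have fs: "f sums r" using sf r_def summable_sums by blast
    have s1: "(\<lambda>k. f k * a) sums (r * a)" by (rule sums_mult2[OF fs])
    have s2: "(\<lambda>k. a * f k) sums (a * r)" by (rule sums_mult[OF fs])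
    have "f k * a = a * f k" for k
      unfolding f_def by (simp only: mult_scaleR_left mult_scaleR_right power_commutes)
    then have "(\<lambda>k. f k * a) = (\<lambda>k. a * f k)" by (rule ext)
    with s1 s2 show ?thesis using sums_unique2 by metis
  qed
  have "r * (1 + a) * r = r * r + r * (a * r)" by (simp add: distrib_left distrib_right mult.assoc)
  also have "\<dots> = r * r + r * (r * a)" by (simp only: ra)
  also have "\<dots> = r * r * (1 + a)" by (simp add: distrib_left mult.assoc)
  also have "\<dots> = 1"
  proof -
    have "norm a < 1" using na by simp
    from geom_sums_alg[OF this] have "(\<lambda>k. (-a)^k * (1 + a)) sums 1" .
    moreover have "(\<lambda>k. (-a)^k * (1 + a)) sums ((\<Sum>k. (-a)^k) * (1 + a))"
    proof (rule sums_mult2, rule summable_sums, rule summable_norm_cancel)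
      show "summable (\<lambda>n. norm ((- a) ^ n))"
        by (rule summable_comparison_test[OF _ summable_geometric[of "1/2::real"]])
           (use na in \<open>auto intro!: order.trans[OF norm_power_ineq] power_mono\<close>)
    qed
    ultimately show ?thesis using rr sums_unique2 by metis
  qed
  finally show ?thesis using ar nr by blast
qed


context
  fixes \<phi> :: "('x::topological_space \<Rightarrow> complex) \<Rightarrow> 'a::cstar_algebra"
  assumes cx: "CX_algebra \<phi>"
begin

lemma cx_add: "continuous_on UNIV f \<Longrightarrow> continuous_on UNIV g \<Longrightarrow> \<phi> (\<lambda>x. f x + g x) = \<phi> f + \<phi> g"
  using cx unfolding CX_algebra_def by blast
lemma cx_mult: "continuous_on UNIV f \<Longrightarrow> continuous_on UNIV g \<Longrightarrow> \<phi> (\<lambda>x. f x * g x) = \<phi> f * \<phi> g"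
  using cx unfolding CX_algebra_def by blast
lemma cx_scale: "continuous_on UNIV f \<Longrightarrow> \<phi> (\<lambda>x. c * f x) = cscale c (\<phi> f)"
  using cx unfolding CX_algebra_def by blast
lemma cx_adj: "continuous_on UNIV f \<Longrightarrow> \<phi> (\<lambda>x. cnj (f x)) = adj (\<phi> f)"
  using cx unfolding CX_algebra_def by blast
lemma cx_one: "\<phi> (\<lambda>x. 1) = 1"
  using cx unfolding CX_algebra_def by blast
lemma cx_central: "continuous_on UNIV f \<Longrightarrow> \<phi> f * d = d * \<phi> f"
  using cx unfolding CX_algebra_def by blast

lemma cx_zero: "\<phi> (\<lambda>x. 0) = 0"
  using cx_add[of "\<lambda>x. 0" "\<lambda>x. 0"] by simp

lemma cx_sa: "continuous_on UNIV f \<Longrightarrow> (\<And>y. cnj (f y) = f y) \<Longrightarrow> adj (\<phi> f) = \<phi> f"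
  using cx_adj[of f] by simp

lemma cx_sum: fixes n :: nat shows "(\<And>i. i < n \<Longrightarrow> continuous_on UNIV (f i)) \<Longrightarrow>
   \<phi> (\<lambda>y. \<Sum>i<n. f i y) = (\<Sum>i<n. \<phi> (f i))"
proof (induction n)
  case 0 then show ?case by (simp add: cx_zero)
next
  case (Suc n)
  have c: "continuous_on UNIV (\<lambda>y. \<Sum>i<n. f i y)"
    using Suc.prems by (intro continuous_intros) auto
  have "\<phi> (\<lambda>y. \<Sum>i<Suc n. f i y) = \<phi> (\<lambda>y. (\<Sum>i<n. f i y) + f n y)" by simp
  also have "\<dots> = \<phi> (\<lambda>y. \<Sum>i<n. f i y) + \<phi> (\<lambda>y. f n y)"
    using cx_add[OF c, of "f n"] Suc.prems by simp
  finally show ?case using Suc by simp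
qed

lemma unitary_norm:
  assumes "continuous_on UNIV u" "\<And>y. cnj (u y) * u y = 1"
  shows "norm (\<phi> u) = 1"
proof -
  have "adj (\<phi> u) * \<phi> u = 1"
    using cx_mult[of "\<lambda>y. cnj (u y)" u] cx_adj[of u] assms cx_one
    by (simp add: continuous_on_cnj)
  then have "(norm (\<phi> u))^2 = 1" using cstar_identity[of "\<phi> u"] by simp
  then show ?thesis by (simp add: power2_eq_1_iff) (smt (verit) norm_ge_zero)
qed

lemma contr_real:
  assumes k: "continuous_on UNIV k" and kr: "\<And>y. k y = complex_of_real (Re (k y))"
    and kb: "\<And>y. \<bar>Re (k y)\<bar> \<le> 1"
  shows "norm (\<phi> k) \<le> 1"
proof -
  define s where "s y = complex_of_real (sqrt (1 - (Re (k y))^2))" for y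
  have cs: "continuous_on UNIV s" unfolding s_def
    by (intro continuous_intros k)
  define u where "u y = k y + \<i> * s y" for y
  define v where "v y = k y + (- \<i>) * s y" for y
  have cu: "continuous_on UNIV u" unfolding u_def by (intro continuous_intros k cs)
  have cv: "continuous_on UNIV v" unfolding v_def by (intro continuous_intros k cs)
  have sq: "(Re (k y))^2 \<le> 1" for y using kb[of y] by (simp add: abs_square_le_1)
  have uu: "cnj (u y) * u y = 1" for y
  proof -
    define t where "t = Re (k y)"
    have e: "u y = complex_of_real t + (\<i>) * complex_of_real (sqrt (1 - t^2))"
      unfolding u_def s_def t_def using kr[of y] by simp
    have q: "(sqrt (1 - t^2))^2 = 1 - t^2" using sq[of y] by (simp add: t_def)
    have "cnj (u y) * u y = complex_of_real (t^2 + (sqrt (1 - t^2))^2)"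
      unfolding e by (simp add: complex_eq_iff power2_eq_square)
    also have "\<dots> = 1" using q by simp
    finally show ?thesis .
  qed
  have vv: "cnj (v y) * v y = 1" for y
  proof -
    define t where "t = Re (k y)"
    have e: "v y = complex_of_real t + (- \<i>) * complex_of_real (sqrt (1 - t^2))"
      unfolding v_def s_def t_def using kr[of y] by simp
    have q: "(sqrt (1 - t^2))^2 = 1 - t^2" using sq[of y] by (simp add: t_def)
    have "cnj (v y) * v y = complex_of_real (t^2 + (sqrt (1 - t^2))^2)"
      unfolding e by (simp add: complex_eq_iff power2_eq_square)
    also have "\<dots> = 1" using q by simp
    finally show ?thesis .
  qed
  have ke: "k = (\<lambda>y. (1/2) * (u y + v y))"
    by (auto simp: u_def v_def)
  have cuv: "continuous_on UNIV (\<lambda>y. u y + v y)" by (intro continuous_intros cu cv)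
  have "\<phi> k = \<phi> (\<lambda>y. (1/2) * (u y + v y))" using ke by simp
  also have "\<dots> = cscale (1/2) (\<phi> (\<lambda>y. u y + v y))" by (rule cx_scale[OF cuv])
  also have "\<dots> = cscale (1/2) (\<phi> u + \<phi> v)" by (simp only: cx_add[OF cu cv])
  finally have "\<phi> k = cscale (1/2) (\<phi> u + \<phi> v)" .
  then have "norm (\<phi> k) = 1/2 * norm (\<phi> u + \<phi> v)" by (simp add: norm_cscale)
  also have "\<dots> \<le> 1/2 * (norm (\<phi> u) + norm (\<phi> v))" by (simp add: norm_triangle_ineq)
  also have "\<dots> = 1" using unitary_norm[OF cu uu] unitary_norm[OF cv vv] by simp
  finally show ?thesis .
qed

lemma contr:
  assumes h: "continuous_on UNIV h" and hb: "\<And>y. cmod (h y) \<le> c"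
  shows "norm (\<phi> h) \<le> c"
proof (cases "c > 0")
  case False
  have "cmod (h y) \<le> 0" for y using hb[of y] False by linarith
  then have "h y = 0" for y by simp
  then have "h = (\<lambda>y. 0)" by (rule ext)
  then show ?thesis using cx_zero hb[of undefined] by simp
next
  case True
  define k where "k y = complex_of_real ((cmod (h y))^2 / c^2)" for y
  have ck: "continuous_on UNIV k" unfolding k_def by (intro continuous_intros h) (use True in auto)
  have kb: "\<bar>Re (k y)\<bar> \<le> 1" for y
  proof -
    have "(cmod (h y))^2 \<le> c^2" using hb[of y] by (simp add: power_mono)
    then show ?thesis using True by (simp add: k_def)
  qed
  have "(\<lambda>y. cnj (h y) * h y) = (\<lambda>y. complex_of_real (c^2) * k y)"
    using True by (auto simp: k_def mult.commute intro!: ext) (metis complex_norm_square of_real_power)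
  then have "adj (\<phi> h) * \<phi> h = cscale (complex_of_real (c^2)) (\<phi> k)"
    using cx_mult[of "\<lambda>y. cnj (h y)" h] cx_adj[OF h] cx_scale[OF ck] h
    by (simp add: continuous_on_cnj)
  then have "(norm (\<phi> h))^2 = c^2 * norm (\<phi> k)"
    using cstar_identity[of "\<phi> h"] by (simp add: norm_cscale norm_power)
  also have "\<dots> \<le> c^2 * 1"
  proof -
    have "norm (\<phi> k) \<le> 1" by (rule contr_real[OF ck _ kb]) (simp add: k_def)
    then show ?thesis by (intro mult_left_mono) auto
  qed
  finally have "(norm (\<phi> h))^2 \<le> c^2" by simp
  then show ?thesis by (rule power2_le_imp_le) (use True in simp)
qed

end


definition goodK :: "('x::topological_space \<Rightarrow> complex) \<Rightarrow> 'x set \<Rightarrow> bool" where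
  "goodK k U \<longleftrightarrow> continuous_on UNIV k \<and> (\<forall>y. cmod (k y) \<le> 1) \<and> (\<forall>y. y \<notin> U \<longrightarrow> k y = 0)"

definition small :: "(('x::topological_space \<Rightarrow> complex) \<Rightarrow> 'a::cstar_algebra) \<Rightarrow> 'x \<Rightarrow> 'a \<Rightarrow> bool" where
  "small \<phi> x z \<longleftrightarrow> (\<forall>\<epsilon>>0. \<exists>U. open U \<and> x \<in> U \<and> (\<forall>k. goodK k U \<longrightarrow> norm (\<phi> k * z) \<le> \<epsilon>))"

lemma small_gen:
  assumes cx: "CX_algebra \<phi>" and f: "continuous_on UNIV f" "f x = 0"
  shows "small \<phi> x (\<phi> f * d)"
  unfolding small_def
proof (intro allI impI)
  fix \<epsilon> :: real assume e: "\<epsilon> > 0"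
  define \<delta> where "\<delta> = \<epsilon> / (norm d + 1)"
  have dp: "\<delta> > 0" unfolding \<delta>_def
    by (rule divide_pos_pos[OF e]) (metis add_nonneg_pos norm_ge_zero zero_less_one)
  define U where "U = f -` ball 0 \<delta>"
  have oU: "open U" unfolding U_def by (rule open_vimage[OF open_ball f(1)])
  have xU: "x \<in> U" using f(2) dp by (simp add: U_def)
  have "norm (\<phi> k * (\<phi> f * d)) \<le> \<epsilon>" if gk: "goodK k U" for k
  proof -
    have ck: "continuous_on UNIV k" using gk by (simp add: goodK_def)
    have b: "cmod (k y * f y) \<le> \<delta>" for y
    proof (cases "y \<in> U")
      case True
      then have "cmod (f y) < \<delta>" by (simp add: U_def dist_norm)
      moreover have "cmod (k y) \<le> 1" using gk by (simp add: goodK_def)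
      ultimately have "cmod (k y) * cmod (f y) \<le> 1 * \<delta>"
        by (intro mult_mono) auto
      then show ?thesis by (simp add: norm_mult)
    next
      case False then show ?thesis using gk dp by (simp add: goodK_def)
    qed
    have "\<phi> k * (\<phi> f * d) = \<phi> (\<lambda>y. k y * f y) * d"
      by (simp add: cx_mult[OF cx ck f(1)] mult.assoc)
    then have "norm (\<phi> k * (\<phi> f * d)) \<le> norm (\<phi> (\<lambda>y. k y * f y)) * norm d"
      by (simp add: norm_mult_ineq)
    also have "\<dots> \<le> \<delta> * norm d"
      by (intro mult_right_mono contr[OF cx] b continuous_intros ck f(1)) auto
    also have "\<dots> \<le> \<epsilon>"
    proof -
      have p: "0 < norm d + 1" by (metis add_nonneg_pos norm_ge_zero zero_less_one)
      have "\<epsilon> * norm d \<le> \<epsilon> * (norm d + 1)" using e by simp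
      then show ?thesis unfolding \<delta>_def using p by (simp add: pos_divide_le_eq)
    qed
    finally show ?thesis .
  qed
  then show "\<exists>U. open U \<and> x \<in> U \<and> (\<forall>k. goodK k U \<longrightarrow> norm (\<phi> k * (\<phi> f * d)) \<le> \<epsilon>)"
    using oU xU by blast
qed

lemma small_zero: "small \<phi> x 0"
  unfolding small_def by (intro allI impI exI[of _ UNIV]) auto

lemma small_lin:
  assumes a: "small \<phi> x a" and b: "small \<phi> x b"
  shows "small \<phi> x (c *\<^sub>R a + b)"
  unfolding small_def
proof (intro allI impI)
  fix \<epsilon> :: real assume e: "\<epsilon> > 0"
  have p: "0 < 2 * (\<bar>c\<bar> + 1)" by (simp add: add_nonneg_pos)
  obtain U1 where U1: "open U1" "x \<in> U1" "\<And>k. goodK k U1 \<Longrightarrow> norm (\<phi> k * a) \<le> \<epsilon> / (2 * (\<bar>c\<bar> + 1))"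
    using a e p unfolding small_def by (meson divide_pos_pos)
  obtain U2 where U2: "open U2" "x \<in> U2" "\<And>k. goodK k U2 \<Longrightarrow> norm (\<phi> k * b) \<le> \<epsilon> / 2"
    using b e unfolding small_def by (meson half_gt_zero)
  have "norm (\<phi> k * (c *\<^sub>R a + b)) \<le> \<epsilon>" if gk: "goodK k (U1 \<inter> U2)" for k
  proof -
    have g1: "goodK k U1" and g2: "goodK k U2" using gk by (auto simp: goodK_def)
    have "norm (\<phi> k * (c *\<^sub>R a + b)) \<le> \<bar>c\<bar> * norm (\<phi> k * a) + norm (\<phi> k * b)"
      by (metis distrib_left mult_scaleR_right norm_scaleR norm_triangle_ineq real_norm_def)
    also have "\<dots> \<le> \<bar>c\<bar> * (\<epsilon> / (2 * (\<bar>c\<bar> + 1))) + \<epsilon> / 2"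
      by (intro add_mono mult_left_mono U1(3)[OF g1] U2(3)[OF g2]) auto
    also have "\<bar>c\<bar> * (\<epsilon> / (2 * (\<bar>c\<bar> + 1))) \<le> \<epsilon> / 2"
    proof -
      have "\<bar>c\<bar> * \<epsilon> \<le> (\<bar>c\<bar> + 1) * \<epsilon>" using e by (simp add: distrib_right)
      then show ?thesis using p by (simp add: field_simps)
    qed
    finally show ?thesis by simp
  qed
  then show "\<exists>U. open U \<and> x \<in> U \<and> (\<forall>k. goodK k U \<longrightarrow> norm (\<phi> k * (c *\<^sub>R a + b)) \<le> \<epsilon>)"
    using U1 U2 by (intro exI[of _ "U1 \<inter> U2"]) auto
qed

lemma small_closure:
  assumes cx: "CX_algebra \<phi>" and z: "z \<in> closure S" and S: "\<And>w. w \<in> S \<Longrightarrow> small \<phi> x w"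
  shows "small \<phi> x z"
  unfolding small_def
proof (intro allI impI)
  fix \<epsilon> :: real assume e: "\<epsilon> > 0"
  obtain w where w: "w \<in> S" "dist w z < \<epsilon> / 2" using z e closure_approachable by (metis half_gt_zero)
  obtain U where U: "open U" "x \<in> U" "\<And>k. goodK k U \<Longrightarrow> norm (\<phi> k * w) \<le> \<epsilon> / 2"
    using S[OF w(1)] e unfolding small_def by (meson half_gt_zero)
  have "norm (\<phi> k * z) \<le> \<epsilon>" if gk: "goodK k U" for k
  proof -
    have nk: "norm (\<phi> k) \<le> 1" using gk contr[OF cx, of k 1] by (simp add: goodK_def)
    have "\<phi> k * z = \<phi> k * (z - w) + \<phi> k * w" by (simp add: algebra_simps)
    then have "norm (\<phi> k * z) \<le> norm (\<phi> k * (z - w)) + norm (\<phi> k * w)"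
      by (simp only: norm_triangle_ineq)
    also have "\<dots> \<le> norm (\<phi> k) * norm (z - w) + norm (\<phi> k * w)"
      by (simp add: norm_mult_ineq)
    also have "\<dots> \<le> 1 * (\<epsilon> / 2) + \<epsilon> / 2"
      using w(2) by (intro add_mono mult_mono nk U(3)[OF gk]) (auto simp: dist_norm norm_minus_commute)
    finally show ?thesis by simp
  qed
  then show "\<exists>U. open U \<and> x \<in> U \<and> (\<forall>k. goodK k U \<longrightarrow> norm (\<phi> k * z) \<le> \<epsilon>)"
    using U by blast
qed

lemma small_fibre:
  assumes cx: "CX_algebra \<phi>" and a: "a \<in> fibre_ideal \<phi> x"
  shows "small \<phi> x a"
proof -
  let ?G = "{\<phi> f * d | f d. continuous_on UNIV f \<and> f x = 0}"
  have sp: "small \<phi> x w" if "w \<in> span ?G" for w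
    using that
  proof (induction rule: span_induct_alt)
    case base then show ?case by (rule small_zero)
  next
    case (step c g y)
    then obtain f d where "g = \<phi> f * d" "continuous_on UNIV f" "f x = 0" by blast
    then have "small \<phi> x g" using small_gen[OF cx] by simp
    from small_lin[OF this step.IH] show ?case .
  qed
  show ?thesis
    by (rule small_closure[OF cx a[unfolded fibre_ideal_def] sp])
qed



lemma bump:
  fixes x :: "'x::t2_space"
  assumes cpt: "compact (UNIV::'x set)" and U: "open U" "x \<in> U"
  shows "\<exists>g::'x\<Rightarrow>real. \<exists>V. continuous_on UNIV g \<and> (\<forall>y. 0 \<le> g y \<and> g y \<le> 1) \<and>
     (\<forall>y. y \<notin> U \<longrightarrow> g y = 0) \<and> open V \<and> x \<in> V \<and> (\<forall>y\<in>V. g y = 1)"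
proof -
  have c: "compact_space (euclidean::'x topology)"
    using cpt by (simp add: compact_space_def)
  have h: "Hausdorff_space (euclidean::'x topology)"
    unfolding Hausdorff_space_def by (simp add: separation_t2 disjnt_def)
  have cr: "completely_regular_space (euclidean::'x topology)"
    by (meson c h compact_imp_locally_compact_space locally_compact_regular_imp_completely_regular_space)
  have "closedin euclidean (- U)" using U by (simp add: closed_Compl)
  moreover have "x \<in> topspace euclidean - (- U)" using U by simp
  ultimately obtain f :: "'x \<Rightarrow> real" where
    f: "continuous_map euclidean (top_of_set {0..1}) f" "f x = 0" "f ` (- U) \<subseteq> {1}"
    using cr unfolding completely_regular_space_def by blast
  have cf: "continuous_on UNIV f" and fr: "\<And>y. f y \<in> {0..1}"
    using f(1) by (auto simp: continuous_map_in_subtopology continuous_map_iff_continuous)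
  define g where "g y = min 1 (2 * (1 - f y))" for y
  define V where "V = f -` {..<1/2}"
  have "continuous_on UNIV g" unfolding g_def by (intro continuous_intros cf)
  moreover have "\<forall>y. 0 \<le> g y \<and> g y \<le> 1" using fr by (auto simp: g_def)
  moreover have "\<forall>y. y \<notin> U \<longrightarrow> g y = 0" using f(3) by (auto simp: g_def)
  moreover have "open V" unfolding V_def by (rule open_vimage[OF open_lessThan cf])
  moreover have "x \<in> V" using f(2) by (simp add: V_def)
  moreover have "\<forall>y\<in>V. g y = 1" by (auto simp: V_def g_def)
  ultimately show ?thesis by blast
qed

lemma normalize:
  assumes cx: "CX_algebra \<phi>" and cg: "continuous_on UNIV g" and gr: "\<And>y. cnj (g y) = g y"
    and na: "norm (\<phi> g * (adj s * s - 1)) \<le> 1/2"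
  shows "\<exists>r. adj r = r \<and> norm r \<le> 2 \<and>
     (\<forall>k. continuous_on UNIV k \<longrightarrow> (\<forall>y. k y * g y = k y) \<longrightarrow> \<phi> k * (adj (s * r) * (s * r) - 1) = 0)"
proof -
  define a where "a = \<phi> g * (adj s * s - 1)"
  have sg: "adj (\<phi> g) = \<phi> g" by (rule cx_sa[OF cx cg gr])
  have "adj a = a"
    unfolding a_def by (simp add: adj_mult sg adj_diff adj_one adj_adj cx_central[OF cx cg])
  then obtain r where r: "adj r = r" "norm r \<le> 2" "r * (1 + a) * r = 1"
    using isr na a_def by blast
  have "\<phi> k * (adj (s * r) * (s * r) - 1) = 0"
    if ck: "continuous_on UNIV k" and kg: "\<forall>y. k y * g y = k y" for k
  proof -
    have kgf: "(\<lambda>y. k y * g y) = k" using kg by auto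
    have pk: "\<phi> k * \<phi> g = \<phi> k" using cx_mult[OF cx ck cg] kgf by simp
    have e1: "\<phi> k * (adj s * s) = \<phi> k * (1 + a)"
    proof -
      have "\<phi> k * (1 + a) = \<phi> k + (\<phi> k * \<phi> g) * (adj s * s - 1)"
        by (simp add: a_def distrib_left mult.assoc)
      also have "\<dots> = \<phi> k * (adj s * s)" by (simp add: pk algebra_simps)
      finally show ?thesis by simp
    qed
    have cen: "\<And>z. \<phi> k * z = z * \<phi> k" using cx_central[OF cx ck] by blast
    have "\<phi> k * (adj (s * r) * (s * r)) = \<phi> k * (r * (adj s * s) * r)"
      by (simp add: adj_mult r(1) mult.assoc)
    also have "\<dots> = r * (\<phi> k * (adj s * s)) * r"
      by (metis cen mult.assoc)
    also have "\<dots> = r * (\<phi> k * (1 + a)) * r" by (simp only: e1)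
    also have "\<dots> = \<phi> k * (r * (1 + a) * r)"
      by (metis cen mult.assoc)
    also have "\<dots> = \<phi> k" by (simp add: r(3))
    finally show ?thesis by (simp add: right_diff_distrib)
  qed
  then show ?thesis using r by blast
qed



lemma alg1:
  fixes P S s t T :: "'a::ring_1"
  assumes cen: "\<And>z. P * z = z * P" and pt: "P * (T * t) = P"
  shows "P * ((S - S*t*T) * (s - t*(T* s)) - 1) = P * (S* s - 1) - S*t*(P*(T* s))"
proof -
  have X: "(S - S*t*T) * (s - t*(T* s)) = S* s - S*t*(T* s) - S*t*(T* s) + S*t*(T*t)*(T* s)"
    by (simp add: algebra_simps)
  have Y: "P * (S*t*(T*t)*(T* s)) = S*t*(P*(T* s))"
  proof -
    have "P * (S*t*(T*t)*(T* s)) = (S*t)*(P*(T*t))*(T* s)" by (metis cen mult.assoc)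
    also have "\<dots> = S*t*(P*(T* s))" by (simp add: pt mult.assoc)
    finally show ?thesis .
  qed
  have Z: "P * (S*t*(T* s)) = S*t*(P*(T* s))" by (metis cen mult.assoc)
  show ?thesis
    unfolding X by (simp add: right_diff_distrib distrib_left Y Z)
qed

lemma alg2:
  fixes P S1 s1 S2 s2 :: "'a::ring_1"
  assumes cen: "\<And>z. P * z = z * P"
  shows "P * (S1* s2) = S1 * (P * (s1*S1*(s2*S2))) * s2 - (P*(S1* s1 - 1)) * (S1* s2)
           - (S1* s2) * (P*(S2* s2 - 1)) - (P*(S1* s1 - 1)) * (S1* s2) * (S2* s2 - 1)"
proof -
  define e1 where "e1 = S1* s1 - 1"
  define e2 where "e2 = S2* s2 - 1"
  define b where "b = S1* s2"
  have "S1 * (s1*S1*(s2*S2)) * s2 = (S1* s1)*(S1* s2)*(S2* s2)" by (simp add: mult.assoc)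
  also have "\<dots> = (1 + e1) * b * (1 + e2)" by (simp add: e1_def e2_def b_def)
  finally have q: "S1 * (s1*S1*(s2*S2)) * s2 = b + e1*b + b*e2 + e1*b*e2"
    by (simp add: algebra_simps)
  have "S1 * (P * (s1*S1*(s2*S2))) * s2 = P * (S1 * (s1*S1*(s2*S2)) * s2)"
    by (metis cen mult.assoc)
  also have "\<dots> = P*b + (P*e1)*b + b*(P*e2) + (P*e1)*b*e2"
  proof -
    have "P * (b*e2) = b*(P*e2)" by (metis cen mult.assoc)
    then show ?thesis unfolding q by (simp add: distrib_left mult.assoc)
  qed
  finally show ?thesis by (simp add: e1_def[symmetric] e2_def[symmetric] b_def[symmetric] algebra_simps)
qed



lemma norm2_le: "norm (a::'a::real_normed_algebra) \<le> \<alpha> \<Longrightarrow> norm b \<le> \<beta> \<Longrightarrow> norm (a * b) \<le> \<alpha> * \<beta>"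
  by (meson mult_mono norm_ge_zero norm_mult_ineq order_trans)

lemma norm3_le: "norm (a::'a::real_normed_algebra) \<le> \<alpha> \<Longrightarrow> norm b \<le> \<beta> \<Longrightarrow> norm c \<le> \<gamma> \<Longrightarrow> norm (a * b * c) \<le> \<alpha> * \<beta> * \<gamma>"
  by (meson norm2_le norm_ge_zero order_trans)

lemma goodK_real:
  assumes "continuous_on UNIV g" "\<forall>y. 0 \<le> g y \<and> g y \<le> 1" "\<forall>y. y \<notin> U \<longrightarrow> g y = 0"
  shows "goodK (\<lambda>y. complex_of_real (g y)) U"
  using assms unfolding goodK_def by (auto intro!: continuous_intros)

lemma local_iso:
  fixes \<phi> :: "('x::t2_space \<Rightarrow> complex) \<Rightarrow> 'a::cstar_algebra"
  assumes cx: "CX_algebra \<phi>" and cpt: "compact (UNIV::'x set)"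
    and hyp: "properly_infinite_mod (fibre_ideal \<phi> x)"
  shows "\<exists>U t1 t2. open U \<and> x \<in> U \<and> (\<forall>k. continuous_on UNIV k \<longrightarrow> (\<forall>y. y \<notin> U \<longrightarrow> k y = 0) \<longrightarrow>
     \<phi> k * (adj t1 * t1 - 1) = 0 \<and> \<phi> k * (adj t2 * t2 - 1) = 0 \<and> \<phi> k * (adj t1 * t2) = 0)"
proof -
  obtain s1 s2 where h1: "adj s1 * s1 - 1 \<in> fibre_ideal \<phi> x" and h2: "adj s2 * s2 - 1 \<in> fibre_ideal \<phi> x"
    and h3: "s1 * adj s1 * (s2 * adj s2) \<in> fibre_ideal \<phi> x"
    using hyp unfolding properly_infinite_mod_def by blast
  define e1 where "e1 = adj s1 * s1 - 1"
  define e2 where "e2 = adj s2 * s2 - 1"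
  define e3 where "e3 = s1 * adj s1 * (s2 * adj s2)"
  define b where "b = adj s1 * s2"
  define A where "A = norm s1"
  define B where "B = norm s2"
  define K where "K = A * B + norm b * (2 + norm e2)"
  define \<delta> where "\<delta> = 1 / (2 * (1 + 4 * A * B * K))"
  have A0: "A \<ge> 0" and B0: "B \<ge> 0" by (simp_all add: A_def B_def)
  have K0: "K \<ge> 0" unfolding K_def using A0 B0 by (intro add_nonneg_nonneg mult_nonneg_nonneg) auto
  have ABK: "4 * A * B * K \<ge> 0" using A0 B0 K0 by simp
  have dpos: "\<delta> > 0" unfolding \<delta>_def using ABK by simp
  have dhalf: "\<delta> \<le> 1/2" unfolding \<delta>_def using ABK by (simp add: field_simps)
  have dsum: "\<delta> + B * (A * 2) * (2 * (\<delta> * K)) \<le> 1/2"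
  proof -
    have "\<delta> + B * (A * 2) * (2 * (\<delta> * K)) = \<delta> * (1 + 4 * A * B * K)" by (simp add: algebra_simps)
    also have "\<dots> = 1/2" unfolding \<delta>_def using ABK by (simp add: field_simps)
    finally show ?thesis by simp
  qed
  obtain U1 where U1: "open U1" "x \<in> U1" "\<And>k. goodK k U1 \<Longrightarrow> norm (\<phi> k * e1) \<le> \<delta>"
    using small_fibre[OF cx h1] dpos unfolding small_def e1_def by blast
  obtain U2 where U2: "open U2" "x \<in> U2" "\<And>k. goodK k U2 \<Longrightarrow> norm (\<phi> k * e2) \<le> \<delta>"
    using small_fibre[OF cx h2] dpos unfolding small_def e2_def by blast
  obtain U3 where U3: "open U3" "x \<in> U3" "\<And>k. goodK k U3 \<Longrightarrow> norm (\<phi> k * e3) \<le> \<delta>"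
    using small_fibre[OF cx h3] dpos unfolding small_def e3_def by blast
  define U0 where "U0 = U1 \<inter> U2 \<inter> U3"
  have oU0: "open U0" "x \<in> U0" using U1 U2 U3 by (auto simp: U0_def)
  have gU0: "norm (\<phi> k * e1) \<le> \<delta> \<and> norm (\<phi> k * e2) \<le> \<delta> \<and> norm (\<phi> k * e3) \<le> \<delta>" if "goodK k U0" for k
  proof -
    have "goodK k U1" "goodK k U2" "goodK k U3" using that by (auto simp: goodK_def U0_def)
    then show ?thesis using U1(3) U2(3) U3(3) by blast
  qed
  obtain g1r :: "'x \<Rightarrow> real" and V1 where g1: "continuous_on UNIV g1r" "\<forall>y. 0 \<le> g1r y \<and> g1r y \<le> 1"
      "\<forall>y. y \<notin> U0 \<longrightarrow> g1r y = 0" "open V1" "x \<in> V1" "\<forall>y\<in>V1. g1r y = 1"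
    using bump[OF cpt oU0] by blast
  define g1 where "g1 y = complex_of_real (g1r y)" for y
  have cg1: "continuous_on UNIV g1" unfolding g1_def by (intro continuous_intros g1(1))
  have gk1: "goodK g1 U0" unfolding g1_def by (rule goodK_real[OF g1(1-3)])
  have "norm (\<phi> g1 * (adj s1 * s1 - 1)) \<le> 1/2" using gU0[OF gk1] dhalf by (simp add: e1_def)
  then obtain r1 where r1: "adj r1 = r1" "norm r1 \<le> 2"
    and ex1: "\<And>k. continuous_on UNIV k \<Longrightarrow> (\<forall>y. k y * g1 y = k y) \<Longrightarrow> \<phi> k * (adj (s1 * r1) * (s1 * r1) - 1) = 0"
    using normalize[OF cx cg1, of s1] by (auto simp: g1_def)
  define t1 where "t1 = s1 * r1"
  have nt1: "norm t1 \<le> A * 2" unfolding t1_def A_def by (rule norm2_le[OF order_refl r1(2)])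
  have V1U0: "V1 \<subseteq> U0" using g1 by force
  obtain g2r :: "'x \<Rightarrow> real" and V2 where g2: "continuous_on UNIV g2r" "\<forall>y. 0 \<le> g2r y \<and> g2r y \<le> 1"
      "\<forall>y. y \<notin> V1 \<longrightarrow> g2r y = 0" "open V2" "x \<in> V2" "\<forall>y\<in>V2. g2r y = 1"
    using bump[OF cpt g1(4,5)] by blast
  define g2 where "g2 y = complex_of_real (g2r y)" for y
  have cg2: "continuous_on UNIV g2" unfolding g2_def by (intro continuous_intros g2(1))
  have gk2: "goodK g2 U0" unfolding g2_def using V1U0 g2(1-3) by (intro goodK_real) auto
  have g21: "\<forall>y. g2 y * g1 y = g2 y"
  proof
    fix y show "g2 y * g1 y = g2 y"
      using g1(6) g2(3) by (cases "y \<in> V1") (auto simp: g1_def g2_def)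
  qed
  define P where "P = \<phi> g2"
  have cen: "\<And>z. P * z = z * P" unfolding P_def using cx_central[OF cx cg2] by blast
  have Pt: "P * (adj t1 * t1) = P"
    using ex1[OF cg2 g21] unfolding P_def t1_def by (simp add: right_diff_distrib)
  define w where "w = s2 - t1 * (adj t1 * s2)"
  have aw: "adj (s2 - t1 * (adj t1 * s2)) = adj s2 - adj s2 * t1 * adj t1"
    by (simp add: adj_diff adj_mult adj_adj mult.assoc)
  have eqw: "P * (adj w * w - 1) = P * e2 - adj s2 * t1 * (P * (adj t1 * s2))"
    unfolding w_def aw e2_def by (rule alg1[OF cen Pt])
  have at1: "adj t1 * s2 = r1 * b" by (simp add: t1_def b_def adj_mult r1(1) mult.assoc)
  have Pr: "P * (r1 * b) = r1 * (P * b)" by (metis cen mult.assoc)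
  have nPe: "norm (P * e1) \<le> \<delta>" "norm (P * e2) \<le> \<delta>" "norm (P * e3) \<le> \<delta>"
    using gU0[OF gk2] by (simp_all add: P_def)
  have nPb: "norm (P * b) \<le> \<delta> * K"
  proof -
    have eq: "P * b = adj s1 * (P * e3) * s2 - (P * e1) * b - b * (P * e2) - (P * e1) * b * e2"
      unfolding b_def e1_def e2_def e3_def by (rule alg2[OF cen])
    have n1: "norm (adj s1 * (P * e3) * s2) \<le> A * \<delta> * B"
      by (rule norm3_le) (auto simp: norm_adj A_def B_def nPe)
    have n2: "norm ((P * e1) * b) \<le> \<delta> * norm b" by (rule norm2_le[OF nPe(1) order_refl])
    have n3: "norm (b * (P * e2)) \<le> norm b * \<delta>" by (rule norm2_le[OF order_refl nPe(2)])
    have n4: "norm ((P * e1) * b * e2) \<le> \<delta> * norm b * norm e2" by (rule norm3_le[OF nPe(1) order_refl order_refl])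
    have "norm (P * b) \<le> norm (adj s1 * (P * e3) * s2) + norm ((P * e1) * b) + norm (b * (P * e2)) + norm ((P * e1) * b * e2)"
      unfolding eq by (smt (verit) norm_triangle_ineq4)
    also have "\<dots> \<le> A * \<delta> * B + \<delta> * norm b + norm b * \<delta> + \<delta> * norm b * norm e2"
      using n1 n2 n3 n4 by linarith
    also have "\<dots> = \<delta> * K" by (simp add: K_def algebra_simps)
    finally show ?thesis .
  qed
  have "norm (P * (adj w * w - 1)) \<le> 1/2"
  proof -
    have "norm (P * (adj w * w - 1)) \<le> norm (P * e2) + norm (adj s2 * t1 * (P * (adj t1 * s2)))"
      unfolding eqw by (rule norm_triangle_ineq4)
    also have "norm (adj s2 * t1 * (P * (adj t1 * s2))) \<le> B * (A * 2) * (2 * (\<delta> * K))"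
    proof (rule norm3_le)
      show "norm (adj s2) \<le> B" by (simp add: norm_adj B_def)
      show "norm t1 \<le> A * 2" by (rule nt1)
      show "norm (P * (adj t1 * s2)) \<le> 2 * (\<delta> * K)"
        unfolding at1 Pr by (rule norm2_le[OF r1(2) nPb])
    qed
    finally show ?thesis using nPe(2) dsum by linarith
  qed
  then obtain r2 where r2: "adj r2 = r2" "norm r2 \<le> 2"
    and ex2: "\<And>k. continuous_on UNIV k \<Longrightarrow> (\<forall>y. k y * g2 y = k y) \<Longrightarrow> \<phi> k * (adj (w * r2) * (w * r2) - 1) = 0"
    using normalize[OF cx cg2, of w] unfolding P_def by (auto simp: g2_def)
  define t2 where "t2 = w * r2"
  have V2V1: "V2 \<subseteq> V1" using g2 by force
  have "\<phi> k * (adj t1 * t1 - 1) = 0 \<and> \<phi> k * (adj t2 * t2 - 1) = 0 \<and> \<phi> k * (adj t1 * t2) = 0"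
    if ck: "continuous_on UNIV k" and kv: "\<forall>y. y \<notin> V2 \<longrightarrow> k y = 0" for k
  proof -
    have k2: "\<forall>y. k y * g2 y = k y"
    proof
      fix y show "k y * g2 y = k y" using kv g2(6) by (cases "y \<in> V2") (auto simp: g2_def)
    qed
    have k1: "\<forall>y. k y * g1 y = k y"
    proof
      fix y show "k y * g1 y = k y" using kv g1(6) V2V1 by (cases "y \<in> V2") (auto simp: g1_def)
    qed
    have a1: "\<phi> k * (adj t1 * t1 - 1) = 0" using ex1[OF ck k1] by (simp add: t1_def)
    have a2: "\<phi> k * (adj t2 * t2 - 1) = 0" using ex2[OF ck k2] by (simp add: t2_def)
    have pk: "\<phi> k * (adj t1 * t1) = \<phi> k" using a1 by (simp add: right_diff_distrib)
    have "\<phi> k * (adj t1 * w) = \<phi> k * (adj t1 * s2) - (\<phi> k * (adj t1 * t1)) * (adj t1 * s2)"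
      by (simp add: w_def right_diff_distrib mult.assoc)
    also have "\<dots> = 0" by (simp add: pk)
    finally have "\<phi> k * (adj t1 * w) = 0" .
    then have a3: "\<phi> k * (adj t1 * t2) = 0" unfolding t2_def
      by (metis mult.assoc mult_zero_left)
    show ?thesis using a1 a2 a3 by blast
  qed
  then show ?thesis using g2(4,5) by blast
qed



lemma cenL:
  fixes P a b :: "'a::ring_1"
  assumes cen: "\<And>z. P * z = z * P"
  shows "P * (a * b) = a * (P * b)"
proof -
  have "P * (a * b) = (P * a) * b" by (simp add: mult.assoc)
  also have "\<dots> = (a * P) * b" by (simp only: cen[of a])
  also have "\<dots> = a * (P * b)" by (simp add: mult.assoc)
  finally show ?thesis .
qed

lemma pow_rel:
  fixes P A t :: "'a::ring_1"
  assumes cen: "\<And>z. P * z = z * P" and pt: "P * (A * t) = P"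
  shows "P * (A^m * t^m') = (if m \<le> m' then P * t^(m'-m) else P * A^(m-m'))"
proof (induction m arbitrary: m')
  case 0 then show ?case by simp
next
  case (Suc m)
  show ?case
  proof (cases m')
    case 0 then show ?thesis by simp
  next
    case (Suc m'')
    have e1: "A^Suc m = A^m * A" by (rule power_Suc2)
    have e2: "t^m' = t * t^m''" by (simp add: Suc)
    have "P * (A^Suc m * t^m') = P * (A^m * ((A * t) * t^m''))"
      by (simp only: e1 e2 mult.assoc)
    also have "\<dots> = A^m * (P * ((A * t) * t^m''))" by (rule cenL[OF cen])
    also have "\<dots> = A^m * ((P * (A * t)) * t^m'')" by (simp only: mult.assoc)
    also have "\<dots> = A^m * (P * t^m'')" by (simp only: pt)
    also have "\<dots> = P * (A^m * t^m'')" by (rule cenL[OF cen, symmetric])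
    finally show ?thesis using Suc.IH[of m''] by (simp add: Suc)
  qed
qed

lemma orth_fam:
  fixes P t1 t2 :: "'a::cstar_algebra"
  assumes cen: "\<And>z. P * z = z * P" and sa: "adj P = P"
    and r1: "P * (adj t1 * t1) = P" and r2: "P * (adj t2 * t2) = P" and r3: "P * (adj t1 * t2) = 0"
  shows "P * (adj (t2^m * t1) * (t2^m' * t1)) = (if m = m' then P else 0)"
proof -
  have r4: "P * (adj t2 * t1) = 0"
  proof -
    have "adj (P * (adj t1 * t2)) = adj t2 * t1 * P" by (simp add: adj_mult adj_adj sa mult.assoc)
    also have "\<dots> = P * (adj t2 * t1)" by (rule cen[symmetric])
    finally show ?thesis using r3 by (simp add: adj_zero)
  qed
  have "P * (adj (t2^m * t1) * (t2^m' * t1)) = P * (adj t1 * (((adj t2)^m * t2^m') * t1))"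
    by (simp add: adj_mult adj_power mult.assoc)
  also have "\<dots> = adj t1 * (P * (((adj t2)^m * t2^m') * t1))" by (rule cenL[OF cen])
  also have "\<dots> = adj t1 * ((P * ((adj t2)^m * t2^m')) * t1)" by (simp only: mult.assoc)
  also have "\<dots> = (if m = m' then P else 0)"
  proof (cases "m = m'")
    case True
    then have "adj t1 * ((P * ((adj t2)^m * t2^m')) * t1) = adj t1 * (P * t1)"
      using pow_rel[OF cen r2, of m m'] by simp
    also have "\<dots> = P * (adj t1 * t1)" by (rule cenL[OF cen, symmetric])
    also have "\<dots> = P" by (rule r1)
    finally show ?thesis using True by simp
  next
    case False
    show ?thesis
    proof (cases "m < m'")
      case True
      then obtain d where d: "m' - m = Suc d" by (metis Suc_diff_Suc)
      have "adj t1 * ((P * ((adj t2)^m * t2^m')) * t1) = adj t1 * ((P * t2^Suc d) * t1)"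
        using pow_rel[OF cen r2, of m m'] True d by simp
      also have "\<dots> = adj t1 * (P * (t2 * (t2^d * t1)))" by (simp add: mult.assoc)
      also have "\<dots> = P * (adj t1 * (t2 * (t2^d * t1)))" by (rule cenL[OF cen, symmetric])
      also have "\<dots> = (P * (adj t1 * t2)) * (t2^d * t1)" by (simp only: mult.assoc)
      also have "\<dots> = 0" by (simp add: r3)
      finally show ?thesis using False by simp
    next
      case False2: False
      then have lt: "m' < m" using False by simp
      then obtain d where d: "m - m' = Suc d" by (metis Suc_diff_Suc)
      have "adj t1 * ((P * ((adj t2)^m * t2^m')) * t1) = adj t1 * ((P * (adj t2)^Suc d) * t1)"
        using pow_rel[OF cen r2, of m m'] False2 d lt by simp
      also have "\<dots> = adj t1 * (P * ((adj t2)^d * (adj t2 * t1)))" by (simp only: power_Suc2 mult.assoc)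
      also have "\<dots> = adj t1 * ((adj t2)^d * (P * (adj t2 * t1)))" by (simp only: cenL[OF cen])
      also have "\<dots> = 0" by (simp add: r4)
      finally show ?thesis using False by simp
    qed
  qed
  finally show ?thesis .
qed



lemma triple_zero:
  fixes S1 S2 :: "nat \<Rightarrow> nat \<Rightarrow> 'a::cstar_algebra"
  assumes "\<And>b c. b < l \<Longrightarrow> c < l \<Longrightarrow> (\<Sum>a<l. adj (S1 a b) * S2 a c) = 0"
  shows "(\<Sum>a<l. (\<Sum>b<l. S1 i b * adj (S1 a b)) * (\<Sum>c<l. S2 a c * adj (S2 j c))) = 0"
proof -
  have "(\<Sum>a<l. (\<Sum>b<l. S1 i b * adj (S1 a b)) * (\<Sum>c<l. S2 a c * adj (S2 j c)))
      = (\<Sum>a<l. \<Sum>b<l. \<Sum>c<l. S1 i b * (adj (S1 a b) * S2 a c) * adj (S2 j c))"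
    by (simp add: sum_product mult.assoc)
  also have "\<dots> = (\<Sum>b<l. \<Sum>a<l. \<Sum>c<l. S1 i b * (adj (S1 a b) * S2 a c) * adj (S2 j c))"
    by (rule sum.swap)
  also have "\<dots> = (\<Sum>b<l. \<Sum>c<l. \<Sum>a<l. S1 i b * (adj (S1 a b) * S2 a c) * adj (S2 j c))"
    by (rule sum.cong[OF refl], rule sum.swap)
  also have "\<dots> = (\<Sum>b<l. \<Sum>c<l. S1 i b * (\<Sum>a<l. adj (S1 a b) * S2 a c) * adj (S2 j c))"
    by (simp add: sum_distrib_left sum_distrib_right)
  also have "\<dots> = 0" using assms by simp
  finally show ?thesis .
qed

theorem proposition2p1:
  fixes \<phi> :: "('x::t2_space \<Rightarrow> complex) \<Rightarrow> 'a::cstar_algebra"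
  assumes "compact (UNIV :: 'x set)"
    and "CX_algebra \<phi>"
    and "\<exists>S :: 'a set. countable S \<and> closure S = UNIV"
    and "\<forall>x. properly_infinite_mod (fibre_ideal \<phi> x)"
  shows "\<exists>l::nat. l > 0 \<and> mat_properly_infinite TYPE('a) l"
proof -
  note cpt = assms(1) and cx = assms(2) and hyp = assms(4)
  have L: "\<forall>x. \<exists>U. \<exists>t1. \<exists>t2. open U \<and> x \<in> U \<and> (\<forall>k. continuous_on UNIV k \<longrightarrow> (\<forall>y. y \<notin> U \<longrightarrow> k y = 0) \<longrightarrow>
     \<phi> k * (adj t1 * t1 - 1) = 0 \<and> \<phi> k * (adj t2 * t2 - 1) = 0 \<and> \<phi> k * (adj t1 * t2) = 0)"
  proof
    fix x show "\<exists>U. \<exists>t1. \<exists>t2. open U \<and> x \<in> U \<and> (\<forall>k. continuous_on UNIV k \<longrightarrow> (\<forall>y. y \<notin> U \<longrightarrow> k y = 0) \<longrightarrow>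
     \<phi> k * (adj t1 * t1 - 1) = 0 \<and> \<phi> k * (adj t2 * t2 - 1) = 0 \<and> \<phi> k * (adj t1 * t2) = 0)"
      by (rule local_iso[OF cx cpt hyp[rule_format]])
  qed
  obtain U where LU: "\<forall>x. \<exists>t1. \<exists>t2. open (U x) \<and> x \<in> U x \<and> (\<forall>k. continuous_on UNIV k \<longrightarrow> (\<forall>y. y \<notin> U x \<longrightarrow> k y = 0) \<longrightarrow>
     \<phi> k * (adj t1 * t1 - 1) = 0 \<and> \<phi> k * (adj t2 * t2 - 1) = 0 \<and> \<phi> k * (adj t1 * t2) = 0)"
    using choice[OF L] by (elim exE) (erule that)
  obtain T1 where LT: "\<forall>x. \<exists>t2. open (U x) \<and> x \<in> U x \<and> (\<forall>k. continuous_on UNIV k \<longrightarrow> (\<forall>y. y \<notin> U x \<longrightarrow> k y = 0) \<longrightarrow>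
     \<phi> k * (adj (T1 x) * T1 x - 1) = 0 \<and> \<phi> k * (adj t2 * t2 - 1) = 0 \<and> \<phi> k * (adj (T1 x) * t2) = 0)"
    using choice[OF LU] by (elim exE) (erule that)
  obtain T2 where UT: "\<forall>x. open (U x) \<and> x \<in> U x \<and> (\<forall>k. continuous_on UNIV k \<longrightarrow> (\<forall>y. y \<notin> U x \<longrightarrow> k y = 0) \<longrightarrow>
     \<phi> k * (adj (T1 x) * T1 x - 1) = 0 \<and> \<phi> k * (adj (T2 x) * T2 x - 1) = 0 \<and> \<phi> k * (adj (T1 x) * T2 x) = 0)"
    using choice[OF LT] by (elim exE) (erule that)
  have oU: "open (U x)" and xU: "x \<in> U x" for x using spec[OF UT, of x] by simp_all
  have relU: "\<And>k. continuous_on UNIV k \<Longrightarrow> (\<forall>y. y \<notin> U x \<longrightarrow> k y = 0) \<Longrightarrow>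
     \<phi> k * (adj (T1 x) * T1 x - 1) = 0 \<and> \<phi> k * (adj (T2 x) * T2 x - 1) = 0 \<and> \<phi> k * (adj (T1 x) * T2 x) = 0" for x
    using spec[OF UT, of x] by blast
  have Bx: "\<forall>x. \<exists>f::'x\<Rightarrow>real. continuous_on UNIV f \<and> (\<forall>y. 0 \<le> f y \<and> f y \<le> 1) \<and> (\<forall>y. y \<notin> U x \<longrightarrow> f y = 0) \<and> f x = 1"
  proof
    fix x
    obtain g :: "'x \<Rightarrow> real" and V where g: "continuous_on UNIV g" "\<forall>y. 0 \<le> g y \<and> g y \<le> 1"
      "\<forall>y. y \<notin> U x \<longrightarrow> g y = 0" "open V" "x \<in> V" "\<forall>y\<in>V. g y = 1"
      using bump[OF cpt oU xU] by blast
    then show "\<exists>f::'x\<Rightarrow>real. continuous_on UNIV f \<and> (\<forall>y. 0 \<le> f y \<and> f y \<le> 1) \<and> (\<forall>y. y \<notin> U x \<longrightarrow> f y = 0) \<and> f x = 1"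
      by blast
  qed
  obtain F :: "'x \<Rightarrow> 'x \<Rightarrow> real" where F: "\<forall>x. continuous_on UNIV (F x) \<and> (\<forall>y. 0 \<le> F x y \<and> F x y \<le> 1) \<and> (\<forall>y. y \<notin> U x \<longrightarrow> F x y = 0) \<and> F x x = 1"
    using choice[OF Bx] by (elim exE) (erule that)
  have cF: "continuous_on UNIV (F x)" and F01: "0 \<le> F x y" and Fv: "y \<notin> U x \<Longrightarrow> F x y = 0"
    and Fx: "F x x = 1" for x y
    using spec[OF F, of x] by auto
  have opn: "open {y. 0 < F x y}" if "x \<in> UNIV" for x
    using open_Collect_less[of "\<lambda>y. 0" "F x"] cF[of x] by (simp add: continuous_on_const)
  have cov: "UNIV \<subseteq> (\<Union>x\<in>UNIV. {y. 0 < F x y})"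
  proof
    fix y :: 'x show "y \<in> (\<Union>x\<in>UNIV. {y. 0 < F x y})" using Fx[of y] by (auto intro!: exI[of _ y])
  qed
  obtain C' where C'0: "C' \<subseteq> UNIV" and C': "finite C'" "UNIV \<subseteq> (\<Union>x\<in>C'. {y. 0 < F x y})"
    by (rule compactE_image[OF cpt opn cov])
  obtain xs where xs: "set xs = C'" using finite_list[OF C'(1)] by blast
  define n where "n = length xs"
  define p where "p j = xs ! j" for j
  have cover: "\<exists>j<n. 0 < F (p j) y" for y
  proof -
    obtain x where "x \<in> C'" "0 < F x y" using C'(2) by blast
    then show ?thesis using xs by (auto simp: in_set_conv_nth n_def p_def)
  qed
  have npos: "n > 0" using cover[of undefined] by auto
  define G where "G y = (\<Sum>j<n. (F (p j) y)^2)" for y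
  have Gpos: "G y > 0" for y
  proof -
    obtain j where "j < n" "0 < F (p j) y" using cover by blast
    then show ?thesis unfolding G_def by (intro sum_pos2[of _ j]) auto
  qed
  have cG: "continuous_on UNIV G" unfolding G_def by (intro continuous_intros cF)
  define h where "h j y = complex_of_real (F (p j) y / sqrt (G y))" for j y
  have ch: "continuous_on UNIV (h j)" for j
    unfolding h_def using Gpos by (intro continuous_intros cF cG) (auto simp: less_imp_neq[symmetric])
  have hsum: "(\<Sum>j<n. h j y * h j y) = 1" for y
  proof -
    have e: "h j y * h j y = complex_of_real ((F (p j) y)^2 / G y)" for j
    proof -
      have "h j y * h j y = complex_of_real ((F (p j) y / sqrt (G y)) * (F (p j) y / sqrt (G y)))"
        unfolding h_def by (simp only: of_real_mult)
      also have "(F (p j) y / sqrt (G y)) * (F (p j) y / sqrt (G y)) = (F (p j) y)^2 / G y"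
        using Gpos[of y] by (simp add: power2_eq_square[symmetric] power_divide less_imp_le)
      finally show ?thesis .
    qed
    have "(\<Sum>j<n. h j y * h j y) = complex_of_real (\<Sum>j<n. (F (p j) y)^2 / G y)"
      by (simp add: e)
    also have "(\<Sum>j<n. (F (p j) y)^2 / G y) = 1"
      using Gpos[of y] by (simp add: sum_divide_distrib[symmetric] G_def[symmetric])
    finally show ?thesis by simp
  qed
  have hv: "y \<notin> U (p j) \<Longrightarrow> h j y = 0" for j y using Fv by (simp add: h_def)
  have hr: "cnj (h j y) = h j y" for j y by (simp add: h_def)
  define P where "P j = \<phi> (h j)" for j
  have cen: "\<And>z. P j * z = z * P j" for j unfolding P_def using cx_central[OF cx ch] by blast
  have saP: "adj (P j) = P j" for j unfolding P_def by (rule cx_sa[OF cx ch hr])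
  have rel: "P j * (adj (T1 (p j)) * T1 (p j) - 1) = 0 \<and> P j * (adj (T2 (p j)) * T2 (p j) - 1) = 0 \<and>
      P j * (adj (T1 (p j)) * T2 (p j)) = 0" for j
    unfolding P_def by (rule relU[OF ch]) (use hv in blast)
  define u where "u j m = T2 (p j) ^ m * T1 (p j)" for j m
  have orth: "P j * (adj (u j m) * u j m') = (if m = m' then P j else 0)" for j m m'
    unfolding u_def
    by (rule orth_fam[OF cen saP]) (use rel[of j] in \<open>simp_all add: right_diff_distrib\<close>)
  have PP: "(\<Sum>j<n. P j * P j) = 1"
  proof -
    have "(\<Sum>j<n. P j * P j) = (\<Sum>j<n. \<phi> (\<lambda>y. h j y * h j y))"
      unfolding P_def using cx_mult[OF cx ch ch] by simp
    also have "\<dots> = \<phi> (\<lambda>y. \<Sum>j<n. h j y * h j y)"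
      by (rule cx_sum[OF cx, symmetric]) (intro continuous_intros ch)
    also have "\<dots> = 1" using hsum cx_one[OF cx] by simp
    finally show ?thesis .
  qed
  have gram: "(\<Sum>k<n. adj (P k * u k m) * (P k * u k m')) = (if m = m' then 1 else 0)" for m m'
  proof -
    have "adj (P k * u k m) * (P k * u k m') = P k * (P k * (adj (u k m) * u k m'))" for k
    proof -
      have ck: "\<And>z. P k * z = z * P k" by (rule cen)
      have "adj (P k * u k m) * (P k * u k m') = (adj (u k m) * P k) * (P k * u k m')"
        by (simp only: adj_mult saP)
      also have "\<dots> = adj (u k m) * (P k * (P k * u k m'))" by (simp only: mult.assoc)
      also have "\<dots> = P k * (adj (u k m) * (P k * u k m'))" by (rule cenL[OF ck, symmetric])
      also have "adj (u k m) * (P k * u k m') = P k * (adj (u k m) * u k m')" by (rule cenL[OF ck, symmetric])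
      finally show ?thesis .
    qed
    then have "(\<Sum>k<n. adj (P k * u k m) * (P k * u k m')) = (\<Sum>k<n. P k * (if m = m' then P k else 0))"
      using orth by simp
    also have "\<dots> = (if m = m' then 1 else 0)" using PP by simp
    finally show ?thesis .
  qed
  define S1 where "S1 i m = P i * u i m" for i m
  define S2 where "S2 i m = P i * u i (n + m)" for i m
  have m1: "mat_eq n (mat_mult n (mat_adj S1) S1) mat_one"
    unfolding mat_eq_def mat_mult_def mat_adj_def mat_one_def S1_def using gram by simp
  have m2: "mat_eq n (mat_mult n (mat_adj S2) S2) mat_one"
    unfolding mat_eq_def mat_mult_def mat_adj_def mat_one_def S2_def using gram by simp
  have m3: "mat_eq n (mat_mult n (mat_mult n S1 (mat_adj S1)) (mat_mult n S2 (mat_adj S2))) (\<lambda>i j. 0)"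
    unfolding mat_eq_def mat_mult_def mat_adj_def
  proof (intro allI impI)
    fix i j assume "i < n" "j < n"
    have "(\<Sum>a<n. adj (S1 a b) * S2 a c) = 0" if "b < n" "c < n" for b c
      unfolding S1_def S2_def using gram[of b "n + c"] that by simp
    then show "(\<Sum>a<n. (\<Sum>b<n. S1 i b * adj (S1 a b)) * (\<Sum>c<n. S2 a c * adj (S2 j c))) = 0"
      by (rule triple_zero)
  qed
  have "mat_properly_infinite TYPE('a) n"
    unfolding mat_properly_infinite_def using m1 m2 m3 by blast
  then show ?thesis using npos by blast
qed



end
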